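(* Let $X$ be a paracompact topologically complete space and let $\mathcal A$ be a cofinal subfamily of the family of all closed, locally finite, normal covers of $X$ (i.e. every closed, locally finite, normal cover of $X$ is refined by some member of $\mathcal A$). With $\Lambda$, $N_\lambda\subset F_\lambda$ and $\pi^\mu_\lambda$ as in the context, for each $\lambda\in\Lambda$ there exists $\mu\in\Lambda$ with $\mu\supseteq\lambda$ such that $\pi^\mu_\lambda(F_\mu)\subset N_\lambda$. In particular, the system of inclusions $(N_\lambda\hookrightarrow F_\lambda;\lambda\in\Lambda)$ is an isomorphism in the category pro-Top between the inverse systems $(N_\lambda,\pi^\mu_\lambda;\Lambda)$ and $(F_\lambda,\pi^\mu_\lambda;\Lambda)$.
   Context: A topologically complete space is a Tychonoff space complete with respect to its finest uniformity. A closed, locally finite, normal cover $\alpha$ of $X$ is a locally finite cover by closed sets admitting a partition of unity $\{\phi_{\alpha,V}:V\in\alpha\}$ with $\mathrm{cl}(\phi_{\alpha,V}^{-1}((0,1]))\subset\mathrm{int}(V)$, $\sum_V\phi_{\alpha,V}=1$. Construction: $\Lambda$ is the set of finite subsets of $\mathcal A$ directed by inclusion. For $\lambda\in\Lambda$, $N^{(0)}_\lambda$ is the set of functions $v$ on $\lambda$ with $v(\alpha)\in\alpha$ for all $\alpha\in\lambda$ and $\wedge v:=\bigcap_{\alpha\in\lambda}v(\alpha)\neq\emptyset$ (empty intersection meaning $X$). $F_\lambda$ is the simplicial complex (weak topology) with vertex set $N^{(0)}_\lambda$ in which $\{v_1,\dots,v_k\}$ spans a simplex iff $\wedge v_i\cap\wedge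 v_j\neq\emptyset$ for all $i,j$; $N_\lambda$ is its subcomplex with the same vertices in which $\{v_1,\dots,v_k\}$ spans a simplex iff $\bigcap_i\wedge v_i\neq\emptyset$. For $\lambda\subset\mu$, $\pi^\mu_\lambda:F_\mu\to F_\lambda$ is the simplicial map sending each vertex $v$ to its restriction $v|_\lambda$; it maps $N_\mu$ into $N_\lambda$. *)

theory Defs
  imports "HOL-Analysis.Analysis"
begin

definition tychonoff_space :: "'a topology \<Rightarrow> bool" where
  "tychonoff_space X \<longleftrightarrow> t1_space X \<and> completely_regular_space X"

definition refines_cover :: "'a set set \<Rightarrow> 'a set set \<Rightarrow> bool" where
  "refines_cover \<beta> \<alpha> \<longleftrightarrow> (\<forall>B\<in>\<beta>. \<exists>A\<in>\<alpha>. B \<subseteq> A)"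

definition paracompact_space :: "'a topology \<Rightarrow> bool" where
  "paracompact_space X \<longleftrightarrow> Hausdorff_space X \<and>
     (\<forall>\<U>. (\<forall>U\<in>\<U>. openin X U) \<and> \<Union>\<U> = topspace X \<longrightarrow>
        (\<exists>\<V>. (\<forall>V\<in>\<V>. openin X V) \<and> \<Union>\<V> = topspace X \<and>
              locally_finite_in X \<V> \<and> refines_cover \<V> \<U>))"

definition uniformity_on :: "'a set \<Rightarrow> ('a \<times> 'a) set set \<Rightarrow> bool" where
  "uniformity_on S \<U> \<longleftrightarrow>
     \<U> \<noteq> {} \<and>
     (\<forall>U\<in>\<U>. Id_on S \<subseteq> U \<and> U \<subseteq> S \<times> S) \<and>
     (\<forall>U V. U \<in> \<U> \<and> U \<subseteq> V \<and> V \<subseteq> S \<times> S \<longrightarrow> V \<in> \<U>) \<and>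
     (\<forall>U\<in>\<U>. \<forall>V\<in>\<U>. U \<inter> V \<in> \<U>) \<and>
     (\<forall>U\<in>\<U>. U\<inverse> \<in> \<U>) \<and>
     (\<forall>U\<in>\<U>. \<exists>V\<in>\<U>. V O V \<subseteq> U)"

definition compatible_uniformity :: "'a topology \<Rightarrow> ('a \<times> 'a) set set \<Rightarrow> bool" where
  "compatible_uniformity X \<U> \<longleftrightarrow>
     uniformity_on (topspace X) \<U> \<and>
     (\<forall>A. openin X A \<longleftrightarrow> A \<subseteq> topspace X \<and> (\<forall>x\<in>A. \<exists>U\<in>\<U>. U `` {x} \<subseteq> A))"

definition finest_uniformity :: "'a topology \<Rightarrow> ('a \<times> 'a) set set \<Rightarrow> bool" where
  "finest_uniformity X \<U> \<longleftrightarrow>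
     compatible_uniformity X \<U> \<and> (\<forall>\<V>. compatible_uniformity X \<V> \<longrightarrow> \<V> \<subseteq> \<U>)"

definition cauchy_filter_in :: "'a topology \<Rightarrow> ('a \<times> 'a) set set \<Rightarrow> 'a filter \<Rightarrow> bool" where
  "cauchy_filter_in X \<U> F \<longleftrightarrow>
     F \<noteq> bot \<and> eventually (\<lambda>x. x \<in> topspace X) F \<and>
     (\<forall>U\<in>\<U>. \<exists>A. eventually (\<lambda>x. x \<in> A) F \<and> A \<times> A \<subseteq> U)"

definition filter_converges_in :: "'a topology \<Rightarrow> 'a filter \<Rightarrow> 'a \<Rightarrow> bool" where
  "filter_converges_in X F x \<longleftrightarrow>
     x \<in> topspace X \<and> (\<forall>N. openin X N \<and> x \<in> N \<longrightarrow> eventually (\<lambda>y. y \<in> N) F)"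

definition complete_uniformity :: "'a topology \<Rightarrow> ('a \<times> 'a) set set \<Rightarrow> bool" where
  "complete_uniformity X \<U> \<longleftrightarrow>
     (\<forall>F. cauchy_filter_in X \<U> F \<longrightarrow> (\<exists>x. filter_converges_in X F x))"

definition topologically_complete :: "'a topology \<Rightarrow> bool" where
  "topologically_complete X \<longleftrightarrow> tychonoff_space X \<and>
     (\<exists>\<U>. finest_uniformity X \<U> \<and> complete_uniformity X \<U>)"

definition clfn_cover :: "'a topology \<Rightarrow> 'a set set \<Rightarrow> bool" where
  "clfn_cover X \<alpha> \<longleftrightarrow>
     (\<forall>V\<in>\<alpha>. closedin X V) \<and> \<Union>\<alpha> = topspace X \<and> locally_finite_in X \<alpha> \<and>
     (\<exists>\<phi>::'a set \<Rightarrow> 'a \<Rightarrow> real.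
        (\<forall>V\<in>\<alpha>. continuous_map X euclideanreal (\<phi> V)) \<and>
        (\<forall>V\<in>\<alpha>. \<forall>x\<in>topspace X. 0 \<le> \<phi> V x \<and> \<phi> V x \<le> 1) \<and>
        (\<forall>V\<in>\<alpha>. X closure_of {x \<in> topspace X. \<phi> V x \<in> {0<..1}} \<subseteq> X interior_of V) \<and>
        (\<forall>x\<in>topspace X. finite {V\<in>\<alpha>. \<phi> V x \<noteq> 0} \<and>
                          (\<Sum>V\<in>{V\<in>\<alpha>. \<phi> V x \<noteq> 0}. \<phi> V x) = 1))"

text \<open>Meet of a vertex \<open>v\<close> over \<open>\<lambda>\<close> (empty intersection means the whole space).\<close>
definition meet :: "'a topology \<Rightarrow> 'a set set set \<Rightarrow> ('a set set \<Rightarrow> 'a set) \<Rightarrow> 'a set" where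
  "meet X lam v = topspace X \<inter> (\<Inter>\<alpha>\<in>lam. v \<alpha>)"

text \<open>Vertex set \<open>N^{(0)}_\<lambda>\<close>; vertices are extensional functions on \<open>\<lambda>\<close>.\<close>
definition vertices :: "'a topology \<Rightarrow> 'a set set set \<Rightarrow> ('a set set \<Rightarrow> 'a set) set" where
  "vertices X lam = {v \<in> (\<Pi>\<^sub>E \<alpha>\<in>lam. \<alpha>). meet X lam v \<noteq> {}}"

text \<open>Abstract simplicial complexes are given by their sets of (finite, nonempty) simplices.\<close>
definition F_complex :: "'a topology \<Rightarrow> 'a set set set \<Rightarrow> ('a set set \<Rightarrow> 'a set) set set" where
  "F_complex X lam = {S. finite S \<and> S \<noteq> {} \<and> S \<subseteq> vertices X lam \<and>
      (\<forall>v\<in>S. \<forall>w\<in>S. meet X lam v \<inter> meet X lam w \<noteq> {})}"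

definition N_complex :: "'a topology \<Rightarrow> 'a set set set \<Rightarrow> ('a set set \<Rightarrow> 'a set) set set" where
  "N_complex X lam = {S. finite S \<and> S \<noteq> {} \<and> S \<subseteq> vertices X lam \<and>
      topspace X \<inter> (\<Inter>v\<in>S. meet X lam v) \<noteq> {}}"

text \<open>The bonding simplicial map \<open>\<pi>^\<mu>_\<lambda>\<close> on vertices: restriction to \<open>\<lambda>\<close>.\<close>
definition bond :: "'a set set set \<Rightarrow> ('a set set \<Rightarrow> 'a set) \<Rightarrow> ('a set set \<Rightarrow> 'a set)" where
  "bond lam v = restrict v lam"

definition simplicial_image :: "('v \<Rightarrow> 'w) \<Rightarrow> 'v set set \<Rightarrow> 'w set set" where
  "simplicial_image f K = (\<lambda>S. f ` S) ` K"

end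

theory Submission
  imports Defs
begin


lemma para_cover:
  assumes P: "paracompact_space X" and op: "\<forall>U\<in>\<U>. openin X U" and cov: "\<Union>\<U> = topspace X"
  obtains \<V> where "\<forall>V\<in>\<V>. openin X V" "\<Union>\<V> = topspace X" "locally_finite_in X \<V>" "refines_cover \<V> \<U>"
proof -
  have "\<forall>\<U>. (\<forall>U\<in>\<U>. openin X U) \<and> \<Union>\<U> = topspace X \<longrightarrow>
        (\<exists>\<V>. (\<forall>V\<in>\<V>. openin X V) \<and> \<Union>\<V> = topspace X \<and>
              locally_finite_in X \<V> \<and> refines_cover \<V> \<U>)"
    using P unfolding paracompact_space_def by (rule conjunct2)
  then have "\<exists>\<V>. (\<forall>V\<in>\<V>. openin X V) \<and> \<Union>\<V> = topspace X \<and>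
              locally_finite_in X \<V> \<and> refines_cover \<V> \<U>"
    using op cov by simp
  then show ?thesis using that by blast
qed

lemma para_sep:
  assumes P: "paracompact_space X" and C: "closedin X C"
    and W: "\<forall>c\<in>C. \<exists>W. openin X W \<and> c \<in> W \<and> disjnt D (X closure_of W)"
  shows "\<exists>G. openin X G \<and> C \<subseteq> G \<and> disjnt D (X closure_of G)"
proof -
  define \<U> where "\<U> = insert (topspace X - C) {W. openin X W \<and> disjnt D (X closure_of W)}"
  have op: "\<forall>U\<in>\<U>. openin X U" using C by (auto simp: \<U>_def)
  have cov: "\<Union>\<U> = topspace X"
  proof
    show "\<Union>\<U> \<subseteq> topspace X" using op openin_subset by (meson Union_least)
    show "topspace X \<subseteq> \<Union>\<U>"
    proof
      fix x assume x: "x \<in> topspace X"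
      show "x \<in> \<Union>\<U>"
      proof (cases "x \<in> C")
        case True then obtain W where "openin X W" "x \<in> W" "disjnt D (X closure_of W)" using W by blast
        then show ?thesis by (auto simp: \<U>_def)
      next
        case False then show ?thesis using x by (auto simp: \<U>_def)
      qed
    qed
  qed
  obtain \<V> where V: "\<forall>V\<in>\<V>. openin X V" "\<Union>\<V> = topspace X" "locally_finite_in X \<V>" "refines_cover \<V> \<U>"
    using para_cover[OF P op cov] by blast
  define \<V>' where "\<V>' = {V\<in>\<V>. V \<inter> C \<noteq> {}}"
  have lf: "locally_finite_in X \<V>'" by (rule locally_finite_in_subset[OF V(3)]) (auto simp: \<V>'_def)
  have eq: "X closure_of \<Union>\<V>' = \<Union>((\<lambda>S. X closure_of S) ` \<V>')"
    using closure_of_locally_finite_Union[OF lf] .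
  have dj: "disjnt D (X closure_of V)" if "V \<in> \<V>'" for V
  proof -
    have "V \<in> \<V>" using that by (simp add: \<V>'_def)
    then obtain U where U: "U \<in> \<U>" "V \<subseteq> U" using V(4) unfolding refines_cover_def by meson
    have "U \<noteq> topspace X - C" using U that unfolding \<V>'_def by blast
    then have "disjnt D (X closure_of U)" using U by (auto simp: \<U>_def)
    then show ?thesis using closure_of_mono[OF U(2)] by (meson disjnt_subset2)
  qed
  have CV: "C \<subseteq> \<Union>\<V>'"
  proof
    fix c assume "c \<in> C"
    then have "c \<in> \<Union>\<V>" using V(2) closedin_subset[OF C] by auto
    then obtain V where "V \<in> \<V>" "c \<in> V" by blast
    then show "c \<in> \<Union>\<V>'" using \<open>c \<in> C\<close> unfolding \<V>'_def by blast
  qed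
  show ?thesis
  proof (intro exI conjI)
    show "openin X (\<Union>\<V>')" using V(1) unfolding \<V>'_def by auto
    show "C \<subseteq> \<Union>\<V>'" by (rule CV)
    show "disjnt D (X closure_of \<Union>\<V>')" unfolding eq using dj by (auto simp: disjnt_def)
  qed
qed


lemma para_regular:
  assumes P: "paracompact_space X" shows "regular_space X"
  unfolding regular_space_def
proof (intro allI impI)
  fix C a assume Ca: "closedin X C \<and> a \<in> topspace X - C"
  then have C: "closedin X C" and a: "a \<in> topspace X" "a \<notin> C" by auto
  have H: "Hausdorff_space X" using P unfolding paracompact_space_def by (rule conjunct1)
  have "\<forall>c\<in>C. \<exists>W. openin X W \<and> c \<in> W \<and> disjnt {a} (X closure_of W)"
  proof
    fix c assume c: "c \<in> C"
    then have ca: "c \<noteq> a" "c \<in> topspace X" using a closedin_subset[OF C] by auto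
    obtain U U' where UU: "openin X U" "openin X U'" "c \<in> U" "a \<in> U'" "disjnt U U'"
      using H ca a unfolding Hausdorff_space_def by meson
    have "U' \<inter> X closure_of U = {}"
      using openin_Int_closure_of_eq_empty[OF UU(2)] UU(5) by (simp add: disjnt_def Int_commute)
    then have "disjnt {a} (X closure_of U)" using UU(4) by (auto simp: disjnt_def)
    then show "\<exists>W. openin X W \<and> c \<in> W \<and> disjnt {a} (X closure_of W)" using UU by blast
  qed
  then obtain G where G: "openin X G" "C \<subseteq> G" "disjnt {a} (X closure_of G)"
    using para_sep[OF P C] by blast
  have "G \<subseteq> X closure_of G" using closure_of_subset[OF openin_subset[OF G(1)]] .
  then have "disjnt (topspace X - X closure_of G) G" by (auto simp: disjnt_def)
  moreover have "a \<in> topspace X - X closure_of G" using G(3) a by (auto simp: disjnt_def)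
  moreover have "openin X (topspace X - X closure_of G)" by (simp add: openin_diff)
  ultimately show "\<exists>U V. openin X U \<and> openin X V \<and> a \<in> U \<and> C \<subseteq> V \<and> disjnt U V"
    using G(1,2) by blast
qed

lemma para_normal:
  assumes P: "paracompact_space X" shows "normal_space X"
  unfolding normal_space_def
proof (intro allI impI)
  fix C D assume CD: "closedin X C \<and> closedin X D \<and> disjnt C D"
  then have C: "closedin X C" and D: "closedin X D" and dj: "disjnt C D" by auto
  have R: "regular_space X" using para_regular[OF P] .
  have "\<forall>c\<in>C. \<exists>W. openin X W \<and> c \<in> W \<and> disjnt D (X closure_of W)"
  proof
    fix c assume c: "c \<in> C"
    then have "c \<in> topspace X - D" using dj closedin_subset[OF C] by (auto simp: disjnt_def)
    with R D have "\<exists>U. openin X U \<and> c \<in> U \<and> disjnt D (X closure_of U)"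
      unfolding regular_space by simp
    then show "\<exists>W. openin X W \<and> c \<in> W \<and> disjnt D (X closure_of W)" .
  qed
  then obtain G where G: "openin X G" "C \<subseteq> G" "disjnt D (X closure_of G)"
    using para_sep[OF P C] by blast
  have "G \<subseteq> X closure_of G" using closure_of_subset[OF openin_subset[OF G(1)]] .
  then have "disjnt G (topspace X - X closure_of G)" by (auto simp: disjnt_def)
  moreover have "D \<subseteq> topspace X - X closure_of G" using G(3) closedin_subset[OF D] by (auto simp: disjnt_def)
  moreover have "openin X (topspace X - X closure_of G)" by (simp add: openin_diff)
  ultimately show "\<exists>U V. openin X U \<and> openin X V \<and> C \<subseteq> U \<and> D \<subseteq> V \<and> disjnt U V"
    using G(1,2) by blast
qed



lemma regular_shrink_cover:
  assumes R: "regular_space X" and op: "\<forall>U\<in>\<U>. openin X U" and cov: "\<Union>\<U> = topspace X"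
  shows "\<Union>{W. openin X W \<and> (\<exists>U\<in>\<U>. X closure_of W \<subseteq> U)} = topspace X"
proof
  show "\<Union>{W. openin X W \<and> (\<exists>U\<in>\<U>. X closure_of W \<subseteq> U)} \<subseteq> topspace X"
    using openin_subset by auto
  show "topspace X \<subseteq> \<Union>{W. openin X W \<and> (\<exists>U\<in>\<U>. X closure_of W \<subseteq> U)}"
  proof
    fix x assume x: "x \<in> topspace X"
    then obtain U where U: "U \<in> \<U>" "x \<in> U" using cov by blast
    have "closedin X (topspace X - U)" using op U by blast
    moreover have "x \<in> topspace X - (topspace X - U)" using x U by blast
    ultimately obtain W where W: "openin X W" "x \<in> W" "disjnt (topspace X - U) (X closure_of W)"
      using R unfolding regular_space by metis
    have "X closure_of W \<subseteq> U" using W(3) closure_of_subset_topspace[of X W] by (auto simp: disjnt_def)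
    then show "x \<in> \<Union>{W. openin X W \<and> (\<exists>U\<in>\<U>. X closure_of W \<subseteq> U)}" using W U by blast
  qed
qed

lemma para_closure_refine:
  assumes P: "paracompact_space X" and op: "\<forall>U\<in>\<U>. openin X U" and cov: "\<Union>\<U> = topspace X"
  obtains \<V> where "\<forall>V\<in>\<V>. openin X V" "\<Union>\<V> = topspace X" "locally_finite_in X \<V>"
    "\<forall>V\<in>\<V>. \<exists>U\<in>\<U>. X closure_of V \<subseteq> U"
proof -
  define W where "W = {W. openin X W \<and> (\<exists>U\<in>\<U>. X closure_of W \<subseteq> U)}"
  have c: "\<Union>W = topspace X" using regular_shrink_cover[OF para_regular[OF P] op cov] unfolding W_def .
  have o: "\<forall>w\<in>W. openin X w" unfolding W_def by blast
  have "\<exists>\<V>. (\<forall>V\<in>\<V>. openin X V) \<and> \<Union>\<V> = topspace X \<and> locally_finite_in X \<V> \<and> refines_cover \<V> W"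
    using P c o unfolding paracompact_space_def by blast
  then obtain \<V> where V: "\<forall>V\<in>\<V>. openin X V" "\<Union>\<V> = topspace X" "locally_finite_in X \<V>" "refines_cover \<V> W"
    by blast
  have "\<forall>V\<in>\<V>. \<exists>U\<in>\<U>. X closure_of V \<subseteq> U"
  proof
    fix V assume "V \<in> \<V>"
    then obtain w where w: "w \<in> W" "V \<subseteq> w" using V(4) unfolding refines_cover_def by blast
    then obtain U where "U \<in> \<U>" "X closure_of w \<subseteq> U" unfolding W_def by blast
    then show "\<exists>U\<in>\<U>. X closure_of V \<subseteq> U" using closure_of_mono[OF w(2)] by blast
  qed
  then show ?thesis using that V by blast
qed



lemma para_clfn_refine:
  assumes P: "paracompact_space X" and op: "\<forall>U\<in>\<U>. openin X U" and cov: "\<Union>\<U> = topspace X"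
  shows "\<exists>\<beta>. clfn_cover X \<beta> \<and> refines_cover \<beta> \<U>"
proof -
  obtain \<V> where Vo: "\<forall>V\<in>\<V>. openin X V" and Vc: "\<Union>\<V> = topspace X" and Vlf: "locally_finite_in X \<V>"
    and VU: "\<forall>V\<in>\<V>. \<exists>U\<in>\<U>. X closure_of V \<subseteq> U"
    using para_closure_refine[OF P op cov] by blast
  obtain \<P> where Po: "\<forall>V\<in>\<P>. openin X V" and Pc: "\<Union>\<P> = topspace X" and Plf: "locally_finite_in X \<P>"
    and PV: "\<forall>V\<in>\<P>. \<exists>U\<in>\<V>. X closure_of V \<subseteq> U"
    using para_closure_refine[OF P Vo Vc] by blast
  define E where "E V = \<Union>((\<lambda>S. X closure_of S) ` {Q\<in>\<P>. X closure_of Q \<subseteq> V})" for V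
  have Ecl: "closedin X (E V)" for V
  proof -
    have "locally_finite_in X {Q\<in>\<P>. X closure_of Q \<subseteq> V}"
      by (rule locally_finite_in_subset[OF Plf]) auto
    then show ?thesis unfolding E_def by (rule closedin_Union_locally_finite_closure)
  qed
  have EV: "E V \<subseteq> V" for V unfolding E_def by auto
  have Ecov: "\<exists>V\<in>\<V>. x \<in> E V" if x: "x \<in> topspace X" for x
  proof -
    obtain Q where Q: "Q \<in> \<P>" "x \<in> Q" using x Pc by blast
    obtain V where V: "V \<in> \<V>" "X closure_of Q \<subseteq> V" using PV Q(1) by blast
    have "x \<in> X closure_of Q" using Q closure_of_subset[OF openin_subset] Po by blast
    then have "x \<in> E V" unfolding E_def using Q V by blast
    then show ?thesis using V by blast
  qed
  have N: "normal_space X" by (rule para_normal[OF P])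
  have ex: "\<exists>G f. openin X G \<and> E V \<subseteq> G \<and> X closure_of G \<subseteq> V \<and> continuous_map X euclideanreal f \<and>
      (\<forall>x\<in>topspace X. 0 \<le> f x \<and> f x \<le> 1) \<and> (\<forall>x\<in>topspace X - G. f x = 0) \<and> (\<forall>x\<in>E V. f x = 1)"
    if V: "V \<in> \<V>" for V
  proof -
    have "\<exists>G. openin X G \<and> E V \<subseteq> G \<and> X closure_of G \<subseteq> V"
      using N Ecl[of V] EV[of V] Vo V unfolding normal_space_alt by blast
    then obtain G where G: "openin X G" "E V \<subseteq> G" "X closure_of G \<subseteq> V" by blast
    have c1: "closedin X (topspace X - G)" using G(1) by (simp add: closedin_diff)
    have dj: "disjnt (topspace X - G) (E V)" using G(2) by (auto simp: disjnt_def)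
    obtain f where f: "continuous_map X (top_of_set {0..1::real}) f" "f ` (topspace X - G) \<subseteq> {0}" "f ` E V \<subseteq> {1}"
      using Urysohn_lemma[OF N c1 Ecl dj, of 0 1] by auto
    have "continuous_map X euclideanreal f \<and> f \<in> topspace X \<rightarrow> {0..1}"
      using f(1) by (simp add: continuous_map_in_subtopology)
    then have fc: "continuous_map X euclideanreal f" and fr: "f \<in> topspace X \<rightarrow> {0..1}" by auto
    show ?thesis
      apply (rule exI[of _ G], rule exI[of _ f])
      using G fc fr f(2,3) by auto
  qed
  then obtain G f where Gf: "\<And>V. V \<in> \<V> \<Longrightarrow> openin X (G V) \<and> E V \<subseteq> G V \<and> X closure_of (G V) \<subseteq> V \<and>
      continuous_map X euclideanreal (f V) \<and>
      (\<forall>x\<in>topspace X. 0 \<le> f V x \<and> f V x \<le> 1) \<and> (\<forall>x\<in>topspace X - G V. f V x = 0) \<and> (\<forall>x\<in>E V. f V x = 1)"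
    by metis
  have GV: "G V \<subseteq> V" if "V \<in> \<V>" for V
    using Gf[OF that] closure_of_subset[OF openin_subset, of X "G V"] by blast
  have fpos: "x \<in> V" if "V \<in> \<V>" "x \<in> topspace X" "f V x \<noteq> 0" for V x
    using Gf[OF that(1)] GV[OF that(1)] that(2,3) by blast
  have fnn: "0 \<le> f V x" if "V \<in> \<V>" "x \<in> topspace X" for V x
    using Gf[OF that(1)] that(2) by blast
  have finx: "finite {V\<in>\<V>. f V x \<noteq> 0}" if x: "x \<in> topspace X" for x
  proof -
    obtain N where N: "openin X N" "x \<in> N" "finite {U\<in>\<V>. U \<inter> N \<noteq> {}}"
      using Vlf x unfolding locally_finite_in_def by blast
    have "{V\<in>\<V>. f V x \<noteq> 0} \<subseteq> {U\<in>\<V>. U \<inter> N \<noteq> {}}" using fpos x N(2) by blast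
    then show ?thesis using N(3) finite_subset by blast
  qed
  define h where "h \<W> x = (\<Sum>V\<in>{V\<in>\<W>. f V x \<noteq> 0}. f V x)" for \<W> x
  have hcont: "continuous_map X euclideanreal (h \<W>)" if W: "\<W> \<subseteq> \<V>" for \<W>
    unfolding continuous_map_atin
  proof
    fix x0 assume x0: "x0 \<in> topspace X"
    obtain N where N: "openin X N" "x0 \<in> N" "finite {U\<in>\<V>. U \<inter> N \<noteq> {}}"
      using Vlf x0 unfolding locally_finite_in_def by blast
    define F where "F = {U\<in>\<V>. U \<inter> N \<noteq> {}} \<inter> \<W>"
    have finF: "finite F" using N(3) unfolding F_def by blast
    define g where "g y = (\<Sum>V\<in>F. f V y)" for y
    have gc: "continuous_map X euclideanreal g"
      unfolding g_def by (rule continuous_map_sum[OF finF]) (use Gf F_def W in blast)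
    have eq: "g y = h \<W> y" if y: "y \<in> N" for y
    proof -
      have yt: "y \<in> topspace X" using y openin_subset[OF N(1)] by blast
      have sub: "{V\<in>\<W>. f V y \<noteq> 0} \<subseteq> F" using fpos[OF _ yt] y W unfolding F_def by blast
      show ?thesis unfolding g_def h_def
        by (rule sum.mono_neutral_right[OF finF sub]) (auto simp: F_def)
    qed
    have "limitin euclideanreal g (g x0) (atin X x0)" using gc x0 unfolding continuous_map_atin by blast
    moreover have "eventually (\<lambda>y. g y = h \<W> y) (atin X x0)"
      unfolding eventually_atin using N(1,2) eq by blast
    ultimately have "limitin euclideanreal (h \<W>) (g x0) (atin X x0)"
      by (rule limitin_transform_eventually[rotated])
    then show "limitin euclideanreal (h \<W>) (h \<W> x0) (atin X x0)" using eq[OF N(2)] by simp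
  qed
  have hnn: "0 \<le> h \<W> x" if "\<W> \<subseteq> \<V>" "x \<in> topspace X" for \<W> x
    unfolding h_def using fnn that by (intro sum_nonneg) blast
  have hle: "h \<W> x \<le> h \<V> x" if "\<W> \<subseteq> \<V>" "x \<in> topspace X" for \<W> x
    unfolding h_def using that fnn by (intro sum_mono2[OF finx[OF that(2)]]) auto
  have hge: "f V x \<le> h \<W> x" if "\<W> \<subseteq> \<V>" "x \<in> topspace X" "V \<in> \<W>" for \<W> V x
  proof (cases "f V x = 0")
    case True then show ?thesis using hnn that(1,2) by simp
  next
    case False
    have fin: "finite {V\<in>\<W>. f V x \<noteq> 0}" by (rule finite_subset[OF _ finx[OF that(2)]]) (use that(1) in auto)
    show ?thesis unfolding h_def
      by (rule member_le_sum) (use False that fnn fin in auto)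
  qed
  have h1: "1 \<le> h \<V> x" if x: "x \<in> topspace X" for x
  proof -
    obtain V where V: "V \<in> \<V>" "x \<in> E V" using Ecov x by blast
    then have "f V x = 1" using Gf by blast
    then show ?thesis using hge[OF _ x V(1)] by simp
  qed
  define \<beta> where "\<beta> = (\<lambda>V. X closure_of V) ` \<V>"
  define \<phi> where "\<phi> B x = h {V\<in>\<V>. X closure_of V = B} x / h \<V> x" for B x
  have ref: "refines_cover \<beta> \<U>" unfolding refines_cover_def \<beta>_def using VU by blast
  have cl: "\<forall>V\<in>\<beta>. closedin X V" unfolding \<beta>_def by auto
  have un: "\<Union>\<beta> = topspace X"
  proof
    show "\<Union>\<beta> \<subseteq> topspace X" unfolding \<beta>_def by (intro Union_least) (auto simp: closure_of_subset_topspace in_closure_of)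
    show "topspace X \<subseteq> \<Union>\<beta>"
    proof
      fix x assume "x \<in> topspace X"
      then obtain V where "V \<in> \<V>" "x \<in> V" using Vc by blast
      then have "x \<in> X closure_of V" using closure_of_subset[OF openin_subset] Vo by blast
      then show "x \<in> \<Union>\<beta>" unfolding \<beta>_def using \<open>V \<in> \<V>\<close> by blast
    qed
  qed
  have lf: "locally_finite_in X \<beta>" unfolding \<beta>_def by (rule locally_finite_in_closure[OF Vlf])
  have pc: "\<forall>B\<in>\<beta>. continuous_map X euclideanreal (\<phi> B)"
  proof
    fix B assume "B \<in> \<beta>"
    have c1: "continuous_map X euclideanreal (h {V\<in>\<V>. X closure_of V = B})" by (rule hcont) auto
    have c2: "continuous_map X euclideanreal (h \<V>)" by (rule hcont) auto
    have nz: "h \<V> x \<noteq> 0" if "x \<in> topspace X" for x using h1[OF that] by linarith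
    show "continuous_map X euclideanreal (\<phi> B)" unfolding \<phi>_def
      by (rule continuous_map_real_divide[OF c1 c2 nz])
  qed
  have pb: "\<forall>B\<in>\<beta>. \<forall>x\<in>topspace X. 0 \<le> \<phi> B x \<and> \<phi> B x \<le> 1"
  proof (intro ballI)
    fix B x assume "B \<in> \<beta>" "x \<in> topspace X"
    have a: "0 \<le> h {V\<in>\<V>. X closure_of V = B} x" "h {V\<in>\<V>. X closure_of V = B} x \<le> h \<V> x"
      using hnn hle \<open>x \<in> topspace X\<close> by auto
    have b: "1 \<le> h \<V> x" using h1 \<open>x \<in> topspace X\<close> by blast
    show "0 \<le> \<phi> B x \<and> \<phi> B x \<le> 1" unfolding \<phi>_def using a b by (simp add: divide_le_eq_1)
  qed
  have ps: "\<forall>B\<in>\<beta>. X closure_of {x \<in> topspace X. \<phi> B x \<in> {0<..1}} \<subseteq> X interior_of B"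
  proof
    fix B assume "B \<in> \<beta>"
    define \<W> where "\<W> = {V\<in>\<V>. X closure_of V = B}"
    have sub: "{x \<in> topspace X. \<phi> B x \<in> {0<..1}} \<subseteq> \<Union>(G ` \<W>)"
    proof
      fix x assume x: "x \<in> {x \<in> topspace X. \<phi> B x \<in> {0<..1}}"
      then have "h \<W> x \<noteq> 0" unfolding \<phi>_def \<W>_def by auto
      then have "{V\<in>\<W>. f V x \<noteq> 0} \<noteq> {}" unfolding h_def by (metis sum.empty)
      then obtain V where V: "V \<in> \<W>" "f V x \<noteq> 0" by blast
      then have "x \<in> G V" using Gf[of V] x unfolding \<W>_def by blast
      then show "x \<in> \<Union>(G ` \<W>)" using V by blast
    qed
    have lfW: "locally_finite_in X (G ` \<W>)"
    proof (rule locally_finite_in_refinement)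
      show "locally_finite_in X \<W>" by (rule locally_finite_in_subset[OF Vlf]) (auto simp: \<W>_def)
      show "G S \<subseteq> S" if "S \<in> \<W>" for S using GV that unfolding \<W>_def by blast
    qed
    have "X closure_of {x \<in> topspace X. \<phi> B x \<in> {0<..1}} \<subseteq> X closure_of \<Union>(G ` \<W>)"
      by (rule closure_of_mono[OF sub])
    also have "\<dots> = \<Union>((\<lambda>S. X closure_of S) ` (G ` \<W>))"
      by (rule closure_of_locally_finite_Union[OF lfW])
    also have "\<dots> \<subseteq> X interior_of B"
    proof
      fix y assume "y \<in> \<Union>((\<lambda>S. X closure_of S) ` (G ` \<W>))"
      then obtain V where V: "V \<in> \<W>" "y \<in> X closure_of (G V)" by blast
      have VV: "V \<in> \<V>" "X closure_of V = B" using V(1) unfolding \<W>_def by auto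
      have "y \<in> V" using V(2) Gf[OF VV(1)] by blast
      moreover have "V \<subseteq> X interior_of B"
        using VV closure_of_subset[OF openin_subset] Vo interior_of_maximal by metis
      ultimately show "y \<in> X interior_of B" by blast
    qed
    finally show "X closure_of {x \<in> topspace X. \<phi> B x \<in> {0<..1}} \<subseteq> X interior_of B" .
  qed
  have psum: "\<forall>x\<in>topspace X. finite {B\<in>\<beta>. \<phi> B x \<noteq> 0} \<and> (\<Sum>B\<in>{B\<in>\<beta>. \<phi> B x \<noteq> 0}. \<phi> B x) = 1"
  proof
    fix x assume x: "x \<in> topspace X"
    define F where "F = {V\<in>\<V>. f V x \<noteq> 0}"
    have finF: "finite F" unfolding F_def by (rule finx[OF x])
    have hpos: "0 < h \<V> x" using h1[OF x] by simp
    have hW: "h {V\<in>\<V>. X closure_of V = B} x = (\<Sum>V\<in>{V\<in>F. X closure_of V = B}. f V x)" for B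
      unfolding h_def F_def by (rule sum.cong) auto
    have eqB: "{B\<in>\<beta>. \<phi> B x \<noteq> 0} = (\<lambda>V. X closure_of V) ` F"
    proof
      show "{B\<in>\<beta>. \<phi> B x \<noteq> 0} \<subseteq> (\<lambda>V. X closure_of V) ` F"
      proof
        fix B assume B: "B \<in> {B\<in>\<beta>. \<phi> B x \<noteq> 0}"
        then have "h {V\<in>\<V>. X closure_of V = B} x \<noteq> 0" unfolding \<phi>_def by auto
        then have "{V\<in>{V\<in>\<V>. X closure_of V = B}. f V x \<noteq> 0} \<noteq> {}" unfolding h_def by (metis sum.empty)
        then obtain V where "V \<in> \<V>" "X closure_of V = B" "f V x \<noteq> 0" by blast
        then show "B \<in> (\<lambda>V. X closure_of V) ` F" unfolding F_def by blast
      qed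
      show "(\<lambda>V. X closure_of V) ` F \<subseteq> {B\<in>\<beta>. \<phi> B x \<noteq> 0}"
      proof
        fix B assume "B \<in> (\<lambda>V. X closure_of V) ` F"
        then obtain V where V: "V \<in> \<V>" "f V x \<noteq> 0" "B = X closure_of V" unfolding F_def by blast
        have "0 < f V x" using fnn[OF V(1) x] V(2) by linarith
        have s1: "{V'\<in>\<V>. X closure_of V' = B} \<subseteq> \<V>" by blast
        have s2: "V \<in> {V'\<in>\<V>. X closure_of V' = B}" using V(1,3) by simp
        note \<open>0 < f V x\<close>
        also have "f V x \<le> h {V\<in>\<V>. X closure_of V = B} x" using hge[OF s1 x s2] .
        finally have "\<phi> B x \<noteq> 0" unfolding \<phi>_def using hpos by simp
        then show "B \<in> {B\<in>\<beta>. \<phi> B x \<noteq> 0}" unfolding \<beta>_def using V by blast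
      qed
    qed
    have "(\<Sum>B\<in>{B\<in>\<beta>. \<phi> B x \<noteq> 0}. \<phi> B x) = (\<Sum>B\<in>(\<lambda>V. X closure_of V) ` F. \<phi> B x)"
      by (simp only: eqB)
    also have "\<dots> = (\<Sum>B\<in>(\<lambda>V. X closure_of V) ` F. h {V\<in>\<V>. X closure_of V = B} x) / h \<V> x"
      unfolding \<phi>_def by (simp add: sum_divide_distrib)
    also have "(\<Sum>B\<in>(\<lambda>V. X closure_of V) ` F. h {V\<in>\<V>. X closure_of V = B} x) = (\<Sum>V\<in>F. f V x)"
      unfolding hW by (rule sum.image_gen[OF finF, symmetric])
    also have "(\<Sum>V\<in>F. f V x) = h \<V> x" unfolding h_def F_def ..
    finally have "(\<Sum>B\<in>{B\<in>\<beta>. \<phi> B x \<noteq> 0}. \<phi> B x) = 1" using hpos by simp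
    then show "finite {B\<in>\<beta>. \<phi> B x \<noteq> 0} \<and> (\<Sum>B\<in>{B\<in>\<beta>. \<phi> B x \<noteq> 0}. \<phi> B x) = 1"
      unfolding eqB using finF by simp
  qed
  have "clfn_cover X \<beta>"
    unfolding clfn_cover_def using cl un lf pc pb ps psum by blast
  then show ?thesis using ref by blast
qed



lemma lf_Un:
  assumes "locally_finite_in X \<A>" "locally_finite_in X \<B>"
  shows "locally_finite_in X (\<A> \<union> \<B>)"
  unfolding locally_finite_in_def
proof (intro conjI ballI)
  show "\<Union>(\<A> \<union> \<B>) \<subseteq> topspace X" using assms unfolding locally_finite_in_def by auto
  fix x assume x: "x \<in> topspace X"
  obtain N1 where N1: "openin X N1" "x \<in> N1" "finite {U\<in>\<A>. U \<inter> N1 \<noteq> {}}"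
    using assms(1) x unfolding locally_finite_in_def by blast
  obtain N2 where N2: "openin X N2" "x \<in> N2" "finite {U\<in>\<B>. U \<inter> N2 \<noteq> {}}"
    using assms(2) x unfolding locally_finite_in_def by blast
  have "{U\<in>\<A> \<union> \<B>. U \<inter> (N1 \<inter> N2) \<noteq> {}} \<subseteq> {U\<in>\<A>. U \<inter> N1 \<noteq> {}} \<union> {U\<in>\<B>. U \<inter> N2 \<noteq> {}}"
    by blast
  then have "finite {U\<in>\<A> \<union> \<B>. U \<inter> (N1 \<inter> N2) \<noteq> {}}"
    using N1(3) N2(3) finite_subset by (metis (no_types, lifting) finite_Un)
  moreover have "openin X (N1 \<inter> N2)" "x \<in> N1 \<inter> N2" using N1 N2 by auto
  ultimately show "\<exists>V. openin X V \<and> x \<in> V \<and> finite {U\<in>\<A> \<union> \<B>. U \<inter> V \<noteq> {}}" by blast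
qed

lemma lf_Union:
  assumes "finite F" "\<forall>a\<in>F. locally_finite_in X a"
  shows "locally_finite_in X (\<Union>F)"
  using assms
proof (induction F rule: finite_induct)
  case empty then show ?case by (simp add: finite_imp_locally_finite_in)
next
  case (insert a F) then show ?case by (simp add: lf_Un)
qed

theorem theorem2p6:
  fixes X :: "'a topology" and \<A> :: "'a set set set"
  assumes "paracompact_space X"
    and "topologically_complete X"
    and "\<forall>\<alpha>\<in>\<A>. clfn_cover X \<alpha>"
    and "\<forall>\<beta>. clfn_cover X \<beta> \<longrightarrow> (\<exists>\<alpha>\<in>\<A>. refines_cover \<alpha> \<beta>)"
  shows "\<forall>lam. finite lam \<and> lam \<subseteq> \<A> \<longrightarrow>
           (\<exists>mu. finite mu \<and> mu \<subseteq> \<A> \<and> lam \<subseteq> mu \<and>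
                simplicial_image (bond lam) (F_complex X mu) \<subseteq> N_complex X lam)"
proof (intro allI impI)
  fix lam assume lam: "finite lam \<and> lam \<subseteq> \<A>"
  then have finlam: "finite lam" and lamA: "lam \<subseteq> \<A>" by auto
  have lamc: "clfn_cover X \<alpha>" if "\<alpha> \<in> lam" for \<alpha> using assms(3) lamA that by blast
  define L where "L = \<Union>lam"
  have Llf: "locally_finite_in X L" unfolding L_def
    by (rule lf_Union[OF finlam]) (use lamc in \<open>auto simp: clfn_cover_def\<close>)
  have Lcl: "closedin X V" if VL: "V \<in> L" for V
  proof -
    obtain \<alpha> where "\<alpha> \<in> lam" "V \<in> \<alpha>" using VL unfolding L_def by blast
    then show ?thesis using lamc unfolding clfn_cover_def by blast
  qed
  define Onb where "Onb x = topspace X - \<Union>{V\<in>L. x \<notin> V}" for x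
  have Oop: "openin X (Onb x)" for x
  proof -
    have "closedin X (\<Union>{V\<in>L. x \<notin> V})"
      by (rule closedin_locally_finite_Union) (use Lcl locally_finite_in_subset[OF Llf] in auto)
    then show ?thesis unfolding Onb_def by (simp add: openin_diff)
  qed
  have xO: "x \<in> Onb x" if "x \<in> topspace X" for x using that unfolding Onb_def by blast
  define \<U> where "\<U> = Onb ` topspace X"
  have Uop: "\<forall>U\<in>\<U>. openin X U" unfolding \<U>_def using Oop by blast
  have Ucov: "\<Union>\<U> = topspace X"
  proof
    show "\<Union>\<U> \<subseteq> topspace X" unfolding \<U>_def Onb_def by blast
    show "topspace X \<subseteq> \<Union>\<U>" unfolding \<U>_def using xO by blast
  qed
  obtain \<beta> where \<beta>: "clfn_cover X \<beta>" "refines_cover \<beta> \<U>"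
    using para_clfn_refine[OF assms(1) Uop Ucov] by blast
  obtain \<delta> where \<delta>: "\<delta> \<in> \<A>" "refines_cover \<delta> \<beta>" using assms(4) \<beta>(1) by blast
  have key: "\<exists>x\<in>topspace X. B \<subseteq> Onb x" if "B \<in> \<delta>" for B
  proof -
    have "\<exists>B'\<in>\<beta>. B \<subseteq> B'" using \<delta>(2) that unfolding refines_cover_def by simp
    then obtain B' where "B' \<in> \<beta>" "B \<subseteq> B'" by blast
    moreover obtain U where "U \<in> \<U>" "B' \<subseteq> U" using \<beta>(2) \<open>B' \<in> \<beta>\<close> unfolding refines_cover_def by blast
    ultimately show ?thesis unfolding \<U>_def by blast
  qed
  define mu where "mu = insert \<delta> lam"
  have "simplicial_image (bond lam) (F_complex X mu) \<subseteq> N_complex X lam"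
  proof
    fix T assume "T \<in> simplicial_image (bond lam) (F_complex X mu)"
    then obtain S where S: "S \<in> F_complex X mu" and T: "T = bond lam ` S"
      unfolding simplicial_image_def by blast
    have Sfin: "finite S" and Sne: "S \<noteq> {}" and Sv: "S \<subseteq> vertices X mu"
      and Sp: "\<forall>v\<in>S. \<forall>w\<in>S. meet X mu v \<inter> meet X mu w \<noteq> {}"
      using S unfolding F_complex_def by auto
    have lm: "lam \<subseteq> mu" unfolding mu_def by blast
    have meq: "meet X lam (bond lam w) = topspace X \<inter> (\<Inter>\<alpha>\<in>lam. w \<alpha>)" for w
      unfolding meet_def bond_def by auto
    have msub: "meet X mu w \<subseteq> meet X lam (bond lam w)" for w
      unfolding meet_def bond_def using lm by auto
    have vert: "bond lam w \<in> vertices X lam" if "w \<in> S" for w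
    proof -
      have w: "w \<in> (\<Pi>\<^sub>E \<alpha>\<in>mu. \<alpha>)" "meet X mu w \<noteq> {}" using Sv that unfolding vertices_def by auto
      have "bond lam w \<in> (\<Pi>\<^sub>E \<alpha>\<in>lam. \<alpha>)" using w(1) lm unfolding bond_def by auto
      moreover have "meet X lam (bond lam w) \<noteq> {}" using w(2) msub[of w] by blast
      ultimately show ?thesis unfolding vertices_def by blast
    qed
    obtain v1 where v1: "v1 \<in> S" using Sne by blast
    have v1d: "v1 \<delta> \<in> \<delta>" using Sv v1 unfolding vertices_def mu_def by auto
    obtain x where x: "x \<in> topspace X" "v1 \<delta> \<subseteq> Onb x" using key[OF v1d] by blast
    have xin: "x \<in> meet X lam (bond lam w)" if w: "w \<in> S" for w
    proof -
      obtain y where y: "y \<in> meet X mu v1" "y \<in> meet X mu w" using Sp v1 w by blast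
      have "y \<in> v1 \<delta>" using y(1) unfolding meet_def mu_def by auto
      then have yO: "y \<in> Onb x" using x(2) by blast
      have wP: "w \<in> (\<Pi>\<^sub>E \<alpha>\<in>mu. \<alpha>)" using Sv w unfolding vertices_def by auto
      have "x \<in> w \<alpha>" if a: "\<alpha> \<in> lam" for \<alpha>
      proof (rule ccontr)
        assume nx: "x \<notin> w \<alpha>"
        have "w \<alpha> \<in> \<alpha>" using wP a lm by auto
        then have "w \<alpha> \<in> L" using a unfolding L_def by blast
        moreover have "y \<in> w \<alpha>" using y(2) a lm unfolding meet_def by auto
        ultimately show False using yO nx unfolding Onb_def by blast
      qed
      then show ?thesis unfolding meq using x(1) by blast
    qed
    show "T \<in> N_complex X lam"
      unfolding N_complex_def
    proof (intro CollectI conjI)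
      show "finite T" using Sfin T by simp
      show "T \<noteq> {}" using Sne T by simp
      show "T \<subseteq> vertices X lam" using vert T by blast
      have "x \<in> topspace X \<inter> (\<Inter>v\<in>T. meet X lam v)" using xin x(1) T by blast
      then show "topspace X \<inter> (\<Inter>v\<in>T. meet X lam v) \<noteq> {}" by blast
    qed
  qed
  moreover have "finite mu" "mu \<subseteq> \<A>" "lam \<subseteq> mu" using finlam lamA \<delta>(1) unfolding mu_def by auto
  ultimately show "\<exists>mu. finite mu \<and> mu \<subseteq> \<A> \<and> lam \<subseteq> mu \<and>
                simplicial_image (bond lam) (F_complex X mu) \<subseteq> N_complex X lam" by blast
qed


end
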